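(* Fix $I_{12},I_{23},I_{31}\in[0,\infty)$. For $(u_1,u_2,u_3)\in\mathcal{U}_E^{123}$, let $\alpha_1,\alpha_2,\alpha_3$ be the inner angles, opposite to sides $l_1,l_2,l_3$ respectively, of the Euclidean triangle with side lengths $l_1,l_2,l_3$. Then at every point of $\mathcal{U}_E^{123}$, the Jacobian matrix $\left(\partial\alpha_i/\partial u_j\right)_{i,j=1}^3$ has: - a zero eigenvalue with eigenvector $(1,1,1)$, and - two negative eigenvalues. In particular, it is negative semi-definite with kernel spanned by $(1,1,1)$.
   Context: Put $r_i=e^{u_i}$ for $i=1,2,3$, and $$l_1^2=r_2^2+r_3^2+2I_{23}r_2r_3,\quad l_2^2=r_3^2+r_1^2+2I_{31}r_3r_1,\quad l_3^2=r_1^2+r_2^2+2I_{12}r_1r_2,$$ with $l_i>0$. The set $\mathcal{U}_E^{123}\subset\mathbb{R}^3$ is the set of $(u_1,u_2,u_3)$ for which $l_1,l_2,l_3$ satisfy the strict triangle inequalities. The Jacobian matrix $\left(\partial\alpha_i/\partial u_j\right)$ is symmetric. *)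

theory Defs
  imports "HOL-Analysis.Derivative" "Jordan_Normal_Form.Char_Poly"
begin

text \<open>Indices are shifted to 0,1,2 (standing for 1,2,3). A point of R^3 is
  represented by u :: nat => real, only u 0, u 1, u 2 being relevant.\<close>

definition edge_len :: "real \<Rightarrow> real \<Rightarrow> real \<Rightarrow> (nat \<Rightarrow> real) \<Rightarrow> nat \<Rightarrow> real" where
  "edge_len I12 I23 I31 u i =
     (let r = (\<lambda>k. exp (u k)) in
      if i = 0 then sqrt ((r 1)\<^sup>2 + (r 2)\<^sup>2 + 2 * I23 * r 1 * r 2)
      else if i = 1 then sqrt ((r 2)\<^sup>2 + (r 0)\<^sup>2 + 2 * I31 * r 2 * r 0)
      else sqrt ((r 0)\<^sup>2 + (r 1)\<^sup>2 + 2 * I12 * r 0 * r 1))"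

definition U_E :: "real \<Rightarrow> real \<Rightarrow> real \<Rightarrow> (nat \<Rightarrow> real) set" where
  "U_E I12 I23 I31 = {u. let l = edge_len I12 I23 I31 u in
      l 0 > 0 \<and> l 1 > 0 \<and> l 2 > 0 \<and>
      l 0 < l 1 + l 2 \<and> l 1 < l 2 + l 0 \<and> l 2 < l 0 + l 1}"

definition tri_angle :: "real \<Rightarrow> real \<Rightarrow> real \<Rightarrow> (nat \<Rightarrow> real) \<Rightarrow> nat \<Rightarrow> real" where
  "tri_angle I12 I23 I31 u i =
     (let l = edge_len I12 I23 I31 u; j = (i + 1) mod 3; k = (i + 2) mod 3 in
      arccos (((l j)\<^sup>2 + (l k)\<^sup>2 - (l i)\<^sup>2) / (2 * l j * l k)))"

definition angle_jacobian :: "real \<Rightarrow> real \<Rightarrow> real \<Rightarrow> (nat \<Rightarrow> real) \<Rightarrow> real mat" where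
  "angle_jacobian I12 I23 I31 u =
     mat 3 3 (\<lambda>(i, j). deriv (\<lambda>t. tri_angle I12 I23 I31 (u(j := t)) i) (u j))"

end

theory Submission
  imports Defs
begin

lemma arccos_quot_deriv:
  fixes fA fB fC :: "real \<Rightarrow> real"
  assumes dA: "(fA has_real_derivative A') (at t)"
    and dB: "(fB has_real_derivative B') (at t)"
    and dC: "(fC has_real_derivative C') (at t)"
    and pA: "fA t > 0" and pB: "fB t > 0"
    and dq: "4 * fA t * fB t - (fA t + fB t - fC t)^2 > 0"
  shows "((\<lambda>t. arccos ((fA t + fB t - fC t) / (2 * sqrt (fA t) * sqrt (fB t)))) has_real_derivative
    - (2 * (A' + B' - C') * fA t * fB t - (fA t + fB t - fC t) * (A' * fB t + fA t * B'))
      / (2 * fA t * fB t * sqrt (4 * fA t * fB t - (fA t + fB t - fC t)^2))) (at t)"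
proof -
  define A where "A = fA t"
  define B where "B = fB t"
  define C where "C = fC t"
  define a where "a = sqrt A"
  define b where "b = sqrt B"
  have a0: "a > 0" "b > 0" using pA pB by (auto simp: a_def b_def A_def B_def)
  have aa: "a^2 = A" "b^2 = B" using pA pB by (auto simp: a_def b_def A_def B_def)
  define N where "N = A + B - C"
  define x where "x = N / (2*a*b)"
  define Dq where "Dq = 4*A*B - N^2"
  have Dq0: "Dq > 0" using dq by (simp add: Dq_def N_def A_def B_def C_def)
  have e1: "1 - x^2 = Dq / (2*a*b)^2"
    using a0 aa by (simp add: x_def Dq_def field_simps power2_eq_square)
  hence sx: "sqrt (1 - x^2) = sqrt Dq / (2*a*b)"
    using a0 by (simp add: real_sqrt_divide)
  have "Dq / (2*a*b)^2 > 0" using Dq0 a0 by simp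
  hence "x^2 < 1" using e1 by linarith
  hence "\<bar>x\<bar> < 1" by (simp add: abs_square_less_1)
  hence x1: "-1 < x" "x < 1" by auto
  have sA: "((\<lambda>t. sqrt (fA t)) has_real_derivative (inverse (sqrt (fA t)) / 2) * A') (at t)"
    using DERIV_chain2[OF DERIV_real_sqrt[OF pA] dA] .
  have sB: "((\<lambda>t. sqrt (fB t)) has_real_derivative (inverse (sqrt (fB t)) / 2) * B') (at t)"
    using DERIV_chain2[OF DERIV_real_sqrt[OF pB] dB] .
  have q: "((\<lambda>t. (fA t + fB t - fC t) / (2 * sqrt (fA t) * sqrt (fB t))) has_real_derivative
     ((A' + B' - C') * (2 * a * b) - N * (2 * (inverse (sqrt A) / 2 * A') * b + 2 * a * (inverse (sqrt B) / 2 * B'))) / (2*a*b)^2) (at t)"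
    apply (rule sA sB dA dB dC derivative_eq_intros refl)+
    using a0 by (auto simp: a_def b_def A_def B_def C_def N_def power2_eq_square algebra_simps)
  have "((\<lambda>t. arccos ((fA t + fB t - fC t) / (2 * sqrt (fA t) * sqrt (fB t)))) has_real_derivative
     inverse (- sqrt (1 - x^2)) * (((A' + B' - C') * (2 * a * b) - N * (2 * (inverse (sqrt A) / 2 * A') * b + 2 * a * (inverse (sqrt B) / 2 * B'))) / (2*a*b)^2)) (at t)"
    apply (rule DERIV_chain2[where f = arccos, OF _ q])
    using x1 unfolding x_def N_def A_def B_def C_def a_def b_def by (rule DERIV_arccos)
  moreover have "inverse (- sqrt (1 - x^2)) * (((A' + B' - C') * (2 * a * b) - N * (2 * (inverse (sqrt A) / 2 * A') * b + 2 * a * (inverse (sqrt B) / 2 * B'))) / (2*a*b)^2)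
     = - (2 * (A' + B' - C') * A * B - N * (A' * B + A * B')) / (2 * A * B * sqrt Dq)"
    unfolding sx using a0 Dq0 aa[symmetric] by (simp add: a_def[symmetric] b_def[symmetric] field_simps power2_eq_square)
  ultimately show ?thesis by (simp add: A_def B_def C_def N_def Dq_def)
qed


definition Iv :: "real \<Rightarrow> real \<Rightarrow> real \<Rightarrow> nat \<Rightarrow> real" where
  "Iv I12 I23 I31 i = (if i = 0 then I23 else if i = 1 then I31 else I12)"

definition Lf :: "real \<Rightarrow> real \<Rightarrow> real \<Rightarrow> (nat \<Rightarrow> real) \<Rightarrow> nat \<Rightarrow> real" where
  "Lf I12 I23 I31 r i = (r ((i+1) mod 3))\<^sup>2 + (r ((i+2) mod 3))\<^sup>2
     + 2 * Iv I12 I23 I31 i * r ((i+1) mod 3) * r ((i+2) mod 3)"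

definition dLf :: "real \<Rightarrow> real \<Rightarrow> real \<Rightarrow> (nat \<Rightarrow> real) \<Rightarrow> nat \<Rightarrow> nat \<Rightarrow> real" where
  "dLf I12 I23 I31 r i m = (let d = (\<lambda>k. if k = m then r k else 0); a = (i+1) mod 3; b = (i+2) mod 3 in
     2 * r a * d a + 2 * r b * d b + 2 * Iv I12 I23 I31 i * (d a * r b + r a * d b))"

definition Ff :: "real \<Rightarrow> real \<Rightarrow> real \<Rightarrow> (nat \<Rightarrow> real) \<Rightarrow> nat \<Rightarrow> real" where
  "Ff I12 I23 I31 r k = (let i = (k+1) mod 3; j = (k+2) mod 3; I = Iv I12 I23 I31 in
     r i * r j * (1 - (I k)\<^sup>2) + r i * r k * (I i + I j * I k) + r j * r k * (I j + I i * I k))"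

definition Ef :: "real \<Rightarrow> real \<Rightarrow> real \<Rightarrow> (nat \<Rightarrow> real) \<Rightarrow> nat \<Rightarrow> real" where
  "Ef I12 I23 I31 r k = 2 * r ((k+1) mod 3) * r ((k+2) mod 3) * Ff I12 I23 I31 r k"

definition numf :: "real \<Rightarrow> real \<Rightarrow> real \<Rightarrow> (nat \<Rightarrow> real) \<Rightarrow> nat \<Rightarrow> nat \<Rightarrow> real" where
  "numf I12 I23 I31 r i m = (let L = Lf I12 I23 I31 r; dL = (\<lambda>x. dLf I12 I23 I31 r x m);
     j = (i+1) mod 3; k = (i+2) mod 3 in
     2 * (dL j + dL k - dL i) * L j * L k - (L j + L k - L i) * (dL j * L k + L j * dL k))"


context fixes I12 I23 I31 :: real and r :: "nat \<Rightarrow> real" begin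
lemma Lf_simps: "Lf I12 I23 I31 r 0 = (r 1)\<^sup>2 + (r 2)\<^sup>2 + 2 * I23 * r 1 * r 2"
  "Lf I12 I23 I31 r 1 = (r 2)\<^sup>2 + (r 0)\<^sup>2 + 2 * I31 * r 2 * r 0"
  "Lf I12 I23 I31 r 2 = (r 0)\<^sup>2 + (r 1)\<^sup>2 + 2 * I12 * r 0 * r 1"
  by (simp_all add: Lf_def Iv_def numeral_2_eq_2)
lemma dLf_simps:
  "dLf I12 I23 I31 r 0 0 = 0"
  "dLf I12 I23 I31 r 0 1 = 2 * (r 1)\<^sup>2 + 2 * I23 * r 1 * r 2"
  "dLf I12 I23 I31 r 0 2 = 2 * (r 2)\<^sup>2 + 2 * I23 * r 1 * r 2"
  "dLf I12 I23 I31 r 1 1 = 0"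
  "dLf I12 I23 I31 r 1 2 = 2 * (r 2)\<^sup>2 + 2 * I31 * r 2 * r 0"
  "dLf I12 I23 I31 r 1 0 = 2 * (r 0)\<^sup>2 + 2 * I31 * r 2 * r 0"
  "dLf I12 I23 I31 r 2 2 = 0"
  "dLf I12 I23 I31 r 2 0 = 2 * (r 0)\<^sup>2 + 2 * I12 * r 0 * r 1"
  "dLf I12 I23 I31 r 2 1 = 2 * (r 1)\<^sup>2 + 2 * I12 * r 0 * r 1"
  by (simp_all add: dLf_def Iv_def numeral_2_eq_2)
lemma Ef_simps:
  "Ef I12 I23 I31 r 0 = 2 * r 1 * r 2 * (r 1 * r 2 * (1 - I23\<^sup>2) + r 1 * r 0 * (I31 + I12 * I23) + r 2 * r 0 * (I12 + I31 * I23))"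
  "Ef I12 I23 I31 r 1 = 2 * r 2 * r 0 * (r 2 * r 0 * (1 - I31\<^sup>2) + r 2 * r 1 * (I12 + I23 * I31) + r 0 * r 1 * (I23 + I12 * I31))"
  "Ef I12 I23 I31 r 2 = 2 * r 0 * r 1 * (r 0 * r 1 * (1 - I12\<^sup>2) + r 0 * r 2 * (I23 + I31 * I12) + r 1 * r 2 * (I31 + I23 * I12))"
  by (simp_all add: Ef_def Ff_def Iv_def numeral_2_eq_2)
lemma numf_simps:
  "numf I12 I23 I31 r 0 m = 2 * (dLf I12 I23 I31 r 1 m + dLf I12 I23 I31 r 2 m - dLf I12 I23 I31 r 0 m) * Lf I12 I23 I31 r 1 * Lf I12 I23 I31 r 2
     - (Lf I12 I23 I31 r 1 + Lf I12 I23 I31 r 2 - Lf I12 I23 I31 r 0) * (dLf I12 I23 I31 r 1 m * Lf I12 I23 I31 r 2 + Lf I12 I23 I31 r 1 * dLf I12 I23 I31 r 2 m)"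
  "numf I12 I23 I31 r 1 m = 2 * (dLf I12 I23 I31 r 2 m + dLf I12 I23 I31 r 0 m - dLf I12 I23 I31 r 1 m) * Lf I12 I23 I31 r 2 * Lf I12 I23 I31 r 0
     - (Lf I12 I23 I31 r 2 + Lf I12 I23 I31 r 0 - Lf I12 I23 I31 r 1) * (dLf I12 I23 I31 r 2 m * Lf I12 I23 I31 r 0 + Lf I12 I23 I31 r 2 * dLf I12 I23 I31 r 0 m)"
  "numf I12 I23 I31 r 2 m = 2 * (dLf I12 I23 I31 r 0 m + dLf I12 I23 I31 r 1 m - dLf I12 I23 I31 r 2 m) * Lf I12 I23 I31 r 0 * Lf I12 I23 I31 r 1
     - (Lf I12 I23 I31 r 0 + Lf I12 I23 I31 r 1 - Lf I12 I23 I31 r 2) * (dLf I12 I23 I31 r 0 m * Lf I12 I23 I31 r 1 + Lf I12 I23 I31 r 0 * dLf I12 I23 I31 r 1 m)"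
  by (simp_all add: numf_def Let_def numeral_2_eq_2)
end

abbreviation "LL I12 I23 I31 r i \<equiv> Lf I12 I23 I31 r i"

lemma polys:
  "- numf I12 I23 I31 r 0 1 * Lf I12 I23 I31 r 2 = 2 * Lf I12 I23 I31 r 1 * Lf I12 I23 I31 r 2 * Ef I12 I23 I31 r 2"
  "- numf I12 I23 I31 r 0 2 * Lf I12 I23 I31 r 1 = 2 * Lf I12 I23 I31 r 1 * Lf I12 I23 I31 r 2 * Ef I12 I23 I31 r 1"
  "- numf I12 I23 I31 r 1 0 * Lf I12 I23 I31 r 2 = 2 * Lf I12 I23 I31 r 2 * Lf I12 I23 I31 r 0 * Ef I12 I23 I31 r 2"
  "- numf I12 I23 I31 r 1 2 * Lf I12 I23 I31 r 0 = 2 * Lf I12 I23 I31 r 2 * Lf I12 I23 I31 r 0 * Ef I12 I23 I31 r 0"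
  "- numf I12 I23 I31 r 2 0 * Lf I12 I23 I31 r 1 = 2 * Lf I12 I23 I31 r 0 * Lf I12 I23 I31 r 1 * Ef I12 I23 I31 r 1"
  "- numf I12 I23 I31 r 2 1 * Lf I12 I23 I31 r 0 = 2 * Lf I12 I23 I31 r 0 * Lf I12 I23 I31 r 1 * Ef I12 I23 I31 r 0"
  "numf I12 I23 I31 r 0 0 = 2 * (Ef I12 I23 I31 r 1 * Lf I12 I23 I31 r 2 + Ef I12 I23 I31 r 2 * Lf I12 I23 I31 r 1)"
  "numf I12 I23 I31 r 1 1 = 2 * (Ef I12 I23 I31 r 2 * Lf I12 I23 I31 r 0 + Ef I12 I23 I31 r 0 * Lf I12 I23 I31 r 2)"
  "numf I12 I23 I31 r 2 2 = 2 * (Ef I12 I23 I31 r 0 * Lf I12 I23 I31 r 1 + Ef I12 I23 I31 r 1 * Lf I12 I23 I31 r 0)"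
  unfolding numf_simps Lf_simps dLf_simps Ef_simps
  by (simp_all add: power2_eq_square algebra_simps)

definition Hf :: "real \<Rightarrow> real \<Rightarrow> real \<Rightarrow> (nat \<Rightarrow> real) \<Rightarrow> real" where
  "Hf I12 I23 I31 r = (r 0)^2 * r 1 * (I31 + I23 * I12) + (r 0)^2 * r 2 * (I12 + I23 * I31)
    + (r 1)^2 * r 0 * (I23 + I31 * I12) + (r 1)^2 * r 2 * (I12 + I23 * I31)
    + (r 2)^2 * r 0 * (I23 + I31 * I12) + (r 2)^2 * r 1 * (I31 + I23 * I12)
    + 2 * r 0 * r 1 * r 2 * (1 + I23 * I31 * I12)"

definition Dsym :: "real \<Rightarrow> real \<Rightarrow> real \<Rightarrow> (nat \<Rightarrow> real) \<Rightarrow> real" where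
  "Dsym I12 I23 I31 r = (let L = Lf I12 I23 I31 r in
     2 * L 0 * L 1 + 2 * L 1 * L 2 + 2 * L 2 * L 0 - (L 0)^2 - (L 1)^2 - (L 2)^2)"

lemma sigma_poly:
  "Ef I12 I23 I31 r 0 * Ef I12 I23 I31 r 1 * Lf I12 I23 I31 r 2 + Ef I12 I23 I31 r 1 * Ef I12 I23 I31 r 2 * Lf I12 I23 I31 r 0
   + Ef I12 I23 I31 r 2 * Ef I12 I23 I31 r 0 * Lf I12 I23 I31 r 1 = r 0 * r 1 * r 2 * Dsym I12 I23 I31 r * Hf I12 I23 I31 r"
  unfolding Dsym_def Let_def Lf_simps Ef_simps Hf_def
  by (simp add: power2_eq_square algebra_simps)

lemma Dq_eq:
  "4 * Lf I12 I23 I31 r 1 * Lf I12 I23 I31 r 2 - (Lf I12 I23 I31 r 1 + Lf I12 I23 I31 r 2 - Lf I12 I23 I31 r 0)^2 = Dsym I12 I23 I31 r"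
  "4 * Lf I12 I23 I31 r 2 * Lf I12 I23 I31 r 0 - (Lf I12 I23 I31 r 2 + Lf I12 I23 I31 r 0 - Lf I12 I23 I31 r 1)^2 = Dsym I12 I23 I31 r"
  "4 * Lf I12 I23 I31 r 0 * Lf I12 I23 I31 r 1 - (Lf I12 I23 I31 r 0 + Lf I12 I23 I31 r 1 - Lf I12 I23 I31 r 2)^2 = Dsym I12 I23 I31 r"
  unfolding Dsym_def Let_def by (simp_all add: power2_eq_square algebra_simps)


lemma lt3x: "(i::nat) < 3 \<Longrightarrow> i = 0 \<or> i = 1 \<or> i = 2" by auto

lemma Iv_nonneg: "I12 \<ge> 0 \<Longrightarrow> I23 \<ge> 0 \<Longrightarrow> I31 \<ge> 0 \<Longrightarrow> Iv I12 I23 I31 i \<ge> 0"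
  by (simp add: Iv_def)

lemma Lf_pos: assumes "I12 \<ge> 0" "I23 \<ge> 0" "I31 \<ge> 0" "\<And>k. r k > 0"
  shows "Lf I12 I23 I31 r i > 0"
proof -
  have "Iv I12 I23 I31 i * r ((i+1) mod 3) * r ((i+2) mod 3) \<ge> 0"
    using Iv_nonneg[OF assms(1-3)] assms(4) by (simp add: less_imp_le)
  moreover have "(r ((i+1) mod 3))\<^sup>2 > 0" using assms(4)[of "(i+1) mod 3"] by simp
  moreover have "(r ((i+2) mod 3))\<^sup>2 \<ge> 0" by simp
  ultimately show ?thesis unfolding Lf_def by linarith
qed

lemma edge_len_Lf: "i < 3 \<Longrightarrow> edge_len I12 I23 I31 u i = sqrt (Lf I12 I23 I31 (\<lambda>k. exp (u k)) i)"
  by (auto dest!: lt3x simp: edge_len_def Lf_def Iv_def numeral_2_eq_2)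

lemma exp_upd_deriv: "((\<lambda>t. exp ((u(m:=t)) k)) has_real_derivative (if k = m then exp (u k) else 0)) (at (u m))"
proof (cases "k = m")
  case True
  then show ?thesis by (simp add: DERIV_exp)
next
  case False
  then show ?thesis by simp
qed

lemma Lf_deriv: "((\<lambda>t. Lf I12 I23 I31 (\<lambda>k. exp ((u(m:=t)) k)) i) has_real_derivative
   dLf I12 I23 I31 (\<lambda>k. exp (u k)) i m) (at (u m))"
  unfolding Lf_def dLf_def Let_def
  apply (rule exp_upd_deriv derivative_eq_intros refl)+
  apply (simp add: algebra_simps)
  done

lemma tri_angle_Lf: assumes "I12 \<ge> 0" "I23 \<ge> 0" "I31 \<ge> 0" "i < 3"
  shows "tri_angle I12 I23 I31 u i =
    (let L = Lf I12 I23 I31 (\<lambda>k. exp (u k)); j = (i+1) mod 3; k = (i+2) mod 3 in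
      arccos ((L j + L k - L i) / (2 * sqrt (L j) * sqrt (L k))))"
proof -
  have L0: "\<And>x. Lf I12 I23 I31 (\<lambda>k. exp (u k)) x > 0" by (rule Lf_pos[OF assms(1-3)]) simp
  show ?thesis unfolding tri_angle_def Let_def
    using assms(4) L0 by (simp add: edge_len_Lf less_imp_le)
qed

lemma Dsym_pos: assumes "I12 \<ge> 0" "I23 \<ge> 0" "I31 \<ge> 0" "u \<in> U_E I12 I23 I31"
  shows "Dsym I12 I23 I31 (\<lambda>k. exp (u k)) > 0"
proof -
  define l where "l = edge_len I12 I23 I31 u"
  have tri: "l 0 > 0" "l 1 > 0" "l 2 > 0" "l 0 < l 1 + l 2" "l 1 < l 2 + l 0" "l 2 < l 0 + l 1"
    using assms(4) by (auto simp: U_E_def l_def Let_def)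
  have L0: "\<And>x. Lf I12 I23 I31 (\<lambda>k. exp (u k)) x > 0" by (rule Lf_pos[OF assms(1-3)]) simp
  have Ll: "Lf I12 I23 I31 (\<lambda>k. exp (u k)) x = (l x)^2" if "x < 3" for x
    using that L0[of x] by (simp add: l_def edge_len_Lf less_imp_le)
  have "Dsym I12 I23 I31 (\<lambda>k. exp (u k)) = (l 0 + l 1 + l 2) * (- l 0 + l 1 + l 2) * (l 0 - l 1 + l 2) * (l 0 + l 1 - l 2)"
    unfolding Dsym_def Let_def using Ll[of 0] Ll[of 1] Ll[of 2]
    by (simp add: power2_eq_square algebra_simps)
  also have "\<dots> > 0" using tri by (intro mult_pos_pos) auto
  finally show ?thesis .
qed

lemma angle_deriv: assumes "I12 \<ge> 0" "I23 \<ge> 0" "I31 \<ge> 0" "u \<in> U_E I12 I23 I31" "i < 3"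
  shows "deriv (\<lambda>t. tri_angle I12 I23 I31 (u(m:=t)) i) (u m) =
    - numf I12 I23 I31 (\<lambda>k. exp (u k)) i m /
      (2 * Lf I12 I23 I31 (\<lambda>k. exp (u k)) ((i+1) mod 3) * Lf I12 I23 I31 (\<lambda>k. exp (u k)) ((i+2) mod 3)
       * sqrt (Dsym I12 I23 I31 (\<lambda>k. exp (u k))))"
proof -
  define f where "f = (\<lambda>x t. Lf I12 I23 I31 (\<lambda>k. exp ((u(m:=t)) k)) x)"
  define r where "r = (\<lambda>k. exp (u k))"
  define j where "j = (i+1) mod 3"
  define k where "k = (i+2) mod 3"
  have fu: "\<And>x. f x (u m) = Lf I12 I23 I31 r x" by (simp add: f_def r_def del: fun_upd_apply)
  have fun_eq: "(\<lambda>t. tri_angle I12 I23 I31 (u(m:=t)) i) =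
     (\<lambda>t. arccos ((f j t + f k t - f i t) / (2 * sqrt (f j t) * sqrt (f k t))))"
    by (rule ext) (simp add: tri_angle_Lf[OF assms(1-3,5)] f_def j_def k_def Let_def)
  have L0: "\<And>x. Lf I12 I23 I31 r x > 0" by (rule Lf_pos[OF assms(1-3)]) (simp add: r_def)
  have Dq: "4 * Lf I12 I23 I31 r j * Lf I12 I23 I31 r k - (Lf I12 I23 I31 r j + Lf I12 I23 I31 r k - Lf I12 I23 I31 r i)^2
     = Dsym I12 I23 I31 r"
  proof -
    consider "i = 0" "j = 1" "k = 2" | "i = 1" "j = 2" "k = 0" | "i = 2" "j = 0" "k = 1"
      using assms(5) by (auto dest!: lt3x simp: j_def k_def)
    thus ?thesis using Dq_eq by cases simp_all
  qed
  have D0: "Dsym I12 I23 I31 r > 0" using Dsym_pos[OF assms(1-4)] by (simp add: r_def)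
  have "((\<lambda>t. arccos ((f j t + f k t - f i t) / (2 * sqrt (f j t) * sqrt (f k t)))) has_real_derivative
    - (2 * (dLf I12 I23 I31 r j m + dLf I12 I23 I31 r k m - dLf I12 I23 I31 r i m) * f j (u m) * f k (u m)
       - (f j (u m) + f k (u m) - f i (u m)) * (dLf I12 I23 I31 r j m * f k (u m) + f j (u m) * dLf I12 I23 I31 r k m))
      / (2 * f j (u m) * f k (u m) * sqrt (4 * f j (u m) * f k (u m) - (f j (u m) + f k (u m) - f i (u m))^2))) (at (u m))"
    apply (rule arccos_quot_deriv)
         apply (simp only: f_def r_def, rule Lf_deriv)
        apply (simp only: f_def r_def, rule Lf_deriv)
       apply (simp only: f_def r_def, rule Lf_deriv)
      apply (simp only: fu, rule L0)
     apply (simp only: fu, rule L0)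
    apply (simp only: fu Dq, rule D0)
    done
  hence "deriv (\<lambda>t. tri_angle I12 I23 I31 (u(m:=t)) i) (u m) =
    - (2 * (dLf I12 I23 I31 r j m + dLf I12 I23 I31 r k m - dLf I12 I23 I31 r i m) * f j (u m) * f k (u m)
       - (f j (u m) + f k (u m) - f i (u m)) * (dLf I12 I23 I31 r j m * f k (u m) + f j (u m) * dLf I12 I23 I31 r k m))
      / (2 * f j (u m) * f k (u m) * sqrt (4 * f j (u m) * f k (u m) - (f j (u m) + f k (u m) - f i (u m))^2))"
    unfolding fun_eq by (rule DERIV_imp_deriv)
  also have "\<dots> = - numf I12 I23 I31 r i m / (2 * Lf I12 I23 I31 r j * Lf I12 I23 I31 r k * sqrt (Dsym I12 I23 I31 r))"
    unfolding fu Dq by (simp add: numf_def Let_def j_def k_def)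
  finally show ?thesis by (simp add: r_def j_def k_def)
qed


lemma det2: fixes A :: "'a::comm_ring_1 mat" assumes A: "A \<in> carrier_mat 2 2"
  shows "det A = A$$(0,0)*A$$(1,1) - A$$(0,1)*A$$(1,0)"
proof -
  have "det A = (\<Sum>j<2. A $$ (0,j) * cofactor A 0 j)" by (rule laplace_expansion_row[OF A]) auto
  also have "\<dots> = A$$(0,0)*A$$(1,1) - A$$(0,1)*A$$(1,0)"
    using A by (simp add: numeral_2_eq_2 cofactor_def det_single mat_delete_def)
  finally show ?thesis .
qed
lemma det3: fixes A :: "'a::comm_ring_1 mat" assumes A: "A \<in> carrier_mat 3 3"
  shows "det A = A$$(0,0)*(A$$(1,1)*A$$(2,2) - A$$(1,2)*A$$(2,1))
     - A$$(0,1)*(A$$(1,0)*A$$(2,2) - A$$(1,2)*A$$(2,0))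
     + A$$(0,2)*(A$$(1,0)*A$$(2,1) - A$$(1,1)*A$$(2,0))" (is "_ = ?r")
proof -
  have md: "\<And>i j. mat_delete A i j \<in> carrier_mat 2 2" using mat_delete_carrier[OF A] by simp
  have "det A = (\<Sum>j<3. A $$ (0,j) * cofactor A 0 j)" by (rule laplace_expansion_row[OF A]) auto
  also have "\<dots> = A $$ (0,0) * cofactor A 0 0 + A $$ (0,1) * cofactor A 0 1 + A $$ (0,2) * cofactor A 0 2"
    by (simp add: numeral_3_eq_3 numeral_2_eq_2)
  also have "\<dots> = ?r"
    unfolding cofactor_def using A
    by (simp add: det2[OF md] mat_delete_index del: mat_delete_carrier, simp add: mat_delete_def, simp add: algebra_simps numeral_2_eq_2)
  finally show ?thesis .
qed

definition Jm :: "(nat \<Rightarrow> real) \<Rightarrow> real mat" where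
  "Jm w = mat 3 3 (\<lambda>(i, m). if i = m then - (w ((i+1) mod 3) + w ((i+2) mod 3)) else w (3 - i - m))"

lemma Jm_carrier: "Jm w \<in> carrier_mat 3 3" by (simp add: Jm_def)

lemma Jm_idx:
  "Jm w $$ (0,0) = - (w 1 + w 2)" "Jm w $$ (0,1) = w 2" "Jm w $$ (0,2) = w 1"
  "Jm w $$ (1,0) = w 2" "Jm w $$ (1,1) = - (w 2 + w 0)" "Jm w $$ (1,2) = w 0"
  "Jm w $$ (2,0) = w 1" "Jm w $$ (2,1) = w 0" "Jm w $$ (2,2) = - (w 0 + w 1)"
  by (simp_all add: Jm_def numeral_2_eq_2)

lemma sum3: "(\<Sum>i\<in>{0..<3::nat}. f i) = f 0 + f 1 + (f 2 :: real)"
  by (simp add: numeral_3_eq_3 numeral_2_eq_2 add.assoc)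

lemma Jm_mult: assumes "v \<in> carrier_vec 3"
  shows "Jm w *\<^sub>v v = Matrix.vec 3 (\<lambda>i. Jm w $$ (i,0) * vec_index v 0 + Jm w $$ (i,1) * vec_index v 1 + Jm w $$ (i,2) * vec_index v 2)"
  using assms Jm_carrier[of w] by (intro eq_vecI) (auto simp: mult_mat_vec_def scalar_prod_def sum3)

lemma lt3: "(i::nat) < 3 \<Longrightarrow> i = 0 \<or> i = 1 \<or> i = 2" by auto

lemma cpm_idx: "i < 3 \<Longrightarrow> j < 3 \<Longrightarrow> char_poly_matrix (Jm w) $$ (i,j) = (if i = j then [:0,1:] else 0) + [: - (Jm w $$ (i,j)) :]"
  unfolding char_poly_matrix_def using Jm_carrier[of w] by auto

lemma Jm_charpoly: assumes xy: "x + y = - 2 * (w 0 + w 1 + w 2)" "x * y = 3 * (w 0 * w 1 + w 1 * w 2 + w 2 * w 0)"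
  shows "char_poly (Jm w) = [:0, 1:] * [:- x, 1:] * [:- y, 1:]"
proof -
  have "char_poly (Jm w) = det (char_poly_matrix (Jm w))" by (simp add: char_poly_def)
  also have "\<dots> = [:0, 1:] * [:- x, 1:] * [:- y, 1:]"
    apply (subst det3)
     apply (use Jm_carrier[of w] in simp)
    apply (simp add: cpm_idx Jm_idx Jm_idx[simplified])
    using xy by (simp add: algebra_simps)
  finally show ?thesis .
qed
lemma pair_pos: fixes x y z :: real assumes "x*y + y*z + z*x > 0" "x + y + z > 0" shows "x + z > 0"
  by (smt (verit) assms(1,2) mult.commute ring_class.ring_distribs(1) zero_less_mult_iff)

lemma qf_nonneg: fixes x y z a b :: real assumes "x*y + y*z + z*x > 0" "x + y + z > 0"
  shows "x * a^2 + y * b^2 + z * (b - a)^2 \<ge> 0"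
proof -
  have ps: "x + z > 0" using pair_pos[OF assms] .
  have "(x + z) * (x * a^2 + y * b^2 + z * (b - a)^2) = ((x+z)*a - z*b)^2 + (x*y + y*z + z*x) * b^2"
    by (simp add: power2_eq_square algebra_simps)
  also have "\<dots> \<ge> 0" using assms(1) by (intro add_nonneg_nonneg) auto
  finally show ?thesis using ps by (simp add: zero_le_mult_iff)
qed

context fixes w :: "nat \<Rightarrow> real"
  assumes sig: "w 0 * w 1 + w 1 * w 2 + w 2 * w 0 > 0" and tr: "w 0 + w 1 + w 2 > 0"
begin

lemma Jm_eigen: "eigenvector (Jm w) (Matrix.vec 3 (\<lambda>_. 1)) 0"
  unfolding eigenvector_def
proof (intro conjI)
  show "Matrix.vec 3 (\<lambda>_. 1::real) \<in> carrier_vec (dim_row (Jm w))" using Jm_carrier[of w] by auto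
  show "Matrix.vec 3 (\<lambda>_. 1::real) \<noteq> 0\<^sub>v (dim_row (Jm w))"
  proof
    assume "Matrix.vec 3 (\<lambda>_. 1::real) = 0\<^sub>v (dim_row (Jm w))"
    hence "vec_index (Matrix.vec 3 (\<lambda>_. 1::real)) 0 = vec_index (0\<^sub>v (dim_row (Jm w))) 0" by (rule arg_cong)
    thus False by (simp add: Jm_def)
  qed
  show "Jm w *\<^sub>v Matrix.vec 3 (\<lambda>_. 1) = 0 \<cdot>\<^sub>v Matrix.vec 3 (\<lambda>_. 1::real)"
    apply (subst Jm_mult, simp)
    apply (rule eq_vecI)
     apply (auto dest!: lt3 simp: Jm_idx Jm_idx[simplified])
    done
qed

lemma Jm_char: "\<exists>a b. a < 0 \<and> b < 0 \<and> char_poly (Jm w) = [:0, 1:] * [:- a, 1:] * [:- b, 1:]"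
proof -
  define T where "T = w 0 + w 1 + w 2"
  define S where "S = w 0 * w 1 + w 1 * w 2 + w 2 * w 0"
  define d where "d = sqrt (T^2 - 3 * S)"
  have dd: "T^2 - 3 * S \<ge> 0"
  proof -
    have "T^2 - 3 * S = ((w 0 - w 1)^2 + (w 1 - w 2)^2 + (w 2 - w 0)^2) / 2"
      by (simp add: T_def S_def power2_eq_square algebra_simps)
    moreover have "((w 0 - w 1)^2 + (w 1 - w 2)^2 + (w 2 - w 0)^2) / 2 \<ge> 0"
      by (intro divide_nonneg_nonneg add_nonneg_nonneg) auto
    ultimately show ?thesis by linarith
  qed
  have d2: "d^2 = T^2 - 3 * S" unfolding d_def by (rule real_sqrt_pow2[OF dd])
  have d0: "d \<ge> 0" unfolding d_def by (rule real_sqrt_ge_zero[OF dd])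
  have S0: "S > 0" using sig by (simp add: S_def)
  have "d^2 < T^2" using d2 S0 by linarith
  hence dT: "d < T" using d0 tr by (simp add: T_def power_less_imp_less_base)
  show ?thesis
  proof (intro exI conjI)
    show "- T + d < 0" using dT by simp
    show "- T - d < 0" using tr d0 by (simp add: T_def)
    show "char_poly (Jm w) = [:0, 1:] * [:- (- T + d), 1:] * [:- (- T - d), 1:]"
      by (rule Jm_charpoly) (use d2 in \<open>simp_all add: T_def S_def power2_eq_square algebra_simps\<close>)
  qed
qed

lemma Jm_nsd: "\<forall>v \<in> carrier_vec 3. v \<bullet> (Jm w *\<^sub>v v) \<le> 0"
proof
  fix v :: "real vec" assume v: "v \<in> carrier_vec 3"
  define x0 where "x0 = vec_index v 0"
  define x1 where "x1 = vec_index v 1"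
  define x2 where "x2 = vec_index v 2"
  have "v \<bullet> (Jm w *\<^sub>v v) = - (w 2 * (x0 - x1)^2 + w 1 * (x0 - x2)^2 + w 0 * ((x0 - x2) - (x0 - x1))^2)"
    using v by (simp add: Jm_mult scalar_prod_def sum3 Jm_idx Jm_idx[simplified] x0_def x1_def x2_def power2_eq_square algebra_simps)
  moreover have "w 2 * (x0 - x1)^2 + w 1 * (x0 - x2)^2 + w 0 * ((x0 - x2) - (x0 - x1))^2 \<ge> 0"
    by (rule qf_nonneg) (use sig tr in \<open>simp_all add: algebra_simps\<close>)
  ultimately show "v \<bullet> (Jm w *\<^sub>v v) \<le> 0" by simp
qed

lemma Jm_ker: "{v \<in> carrier_vec 3. Jm w *\<^sub>v v = 0\<^sub>v 3} = {c \<cdot>\<^sub>v Matrix.vec 3 (\<lambda>_. 1) | c. True}"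
proof (rule equalityI; rule subsetI)
  fix v :: "real vec" assume "v \<in> {v \<in> carrier_vec 3. Jm w *\<^sub>v v = 0\<^sub>v 3}"
  hence v: "v \<in> carrier_vec 3" and J0: "Jm w *\<^sub>v v = 0\<^sub>v 3" by auto
  define x0 where "x0 = vec_index v 0"
  define x1 where "x1 = vec_index v 1"
  define x2 where "x2 = vec_index v 2"
  have e0: "vec_index (Jm w *\<^sub>v v) 0 = 0" and e1: "vec_index (Jm w *\<^sub>v v) 1 = 0" using J0 by auto
  have r0: "- (w 1 + w 2) * x0 + w 2 * x1 + w 1 * x2 = 0"
    using e0 v by (simp add: Jm_mult Jm_idx Jm_idx[simplified] x0_def x1_def x2_def)
  have r1: "w 2 * x0 - (w 2 + w 0) * x1 + w 0 * x2 = 0"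
    using e1 v by (simp add: Jm_mult Jm_idx Jm_idx[simplified] x0_def x1_def x2_def algebra_simps)
  define S where "S = w 0 * w 1 + w 1 * w 2 + w 2 * w 0"
  have "S * (x1 - x0) = w 0 * (- (w 1 + w 2) * x0 + w 2 * x1 + w 1 * x2) - w 1 * (w 2 * x0 - (w 2 + w 0) * x1 + w 0 * x2)"
    by (simp add: S_def algebra_simps)
  hence "S * (x1 - x0) = 0" using r0 r1 by simp
  hence a: "x1 = x0" using sig by (simp add: S_def)
  have "S * (x2 - x0) = (w 2 + w 0) * (- (w 1 + w 2) * x0 + w 2 * x1 + w 1 * x2) + w 2 * (w 2 * x0 - (w 2 + w 0) * x1 + w 0 * x2)"
    by (simp add: S_def algebra_simps)
  hence "S * (x2 - x0) = 0" using r0 r1 by simp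
  hence b: "x2 = x0" using sig by (simp add: S_def)
  have "v = x0 \<cdot>\<^sub>v Matrix.vec 3 (\<lambda>_. 1)"
    apply (rule eq_vecI)
    using v a b by (auto dest!: lt3 simp: x0_def x1_def x2_def)
  thus "v \<in> {c \<cdot>\<^sub>v Matrix.vec 3 (\<lambda>_. 1) | c. True}" by blast
next
  fix v :: "real vec" assume "v \<in> {c \<cdot>\<^sub>v Matrix.vec 3 (\<lambda>_. 1) | c. True}"
  then obtain c where c: "v = c \<cdot>\<^sub>v Matrix.vec 3 (\<lambda>_. 1)" by blast
  have "Jm w *\<^sub>v v = 0\<^sub>v 3"
    unfolding c
    apply (subst Jm_mult, simp)
    apply (rule eq_vecI)
     apply (auto dest!: lt3 simp: Jm_idx Jm_idx[simplified] algebra_simps)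
    done
  thus "v \<in> {v \<in> carrier_vec 3. Jm w *\<^sub>v v = 0\<^sub>v 3}" using c by auto
qed

end


lemma two_neg: fixes x y z a b c :: real
  assumes pos: "x > 0" "y > 0" "z > 0" and nn: "a \<ge> 0" "b \<ge> 0" "c \<ge> 0"
    and A: "y*z*(1 - a\<^sup>2) + y*x*(b + c*a) + z*x*(c + b*a) \<le> 0"
    and B: "z*x*(1 - b\<^sup>2) + z*y*(c + a*b) + x*y*(a + c*b) \<le> 0"
  shows False
proof -
  have t1: "y*x*(b + c*a) \<ge> 0" "z*x*(c + b*a) \<ge> 0" "z*y*(c + a*b) \<ge> 0" "x*y*(a + c*b) \<ge> 0"
    using pos nn by auto
  have A': "y*z*(a\<^sup>2 - 1) \<ge> z*x*(c + a*b)" using A t1 by (simp add: algebra_simps)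
  have B': "z*x*(b\<^sup>2 - 1) \<ge> z*y*(c + a*b)" using B t1 by (simp add: algebra_simps)
  have ca: "z*x*(c + a*b) \<ge> 0" "z*y*(c + a*b) \<ge> 0" using pos nn by auto
  have "y*z*(a\<^sup>2 - 1) \<ge> 0" using A' ca by linarith
  moreover have "y*z > 0" using pos by simp
  ultimately have a1: "a\<^sup>2 \<ge> 1" by (auto simp: zero_le_mult_iff)
  have "z*x*(b\<^sup>2 - 1) \<ge> 0" using B' ca by linarith
  moreover have "z*x > 0" using pos by simp
  ultimately have b1: "b\<^sup>2 \<ge> 1" by (auto simp: zero_le_mult_iff)
  have "(y*z*(a\<^sup>2 - 1)) * (z*x*(b\<^sup>2 - 1)) \<ge> (z*x*(c + a*b)) * (z*y*(c + a*b))"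
    by (rule mult_mono[OF A' B']) (use ca A' in linarith)+
  hence "(x*y*z*z) * ((a\<^sup>2 - 1) * (b\<^sup>2 - 1)) \<ge> (x*y*z*z) * ((c + a*b)\<^sup>2)"
    by (simp add: power2_eq_square algebra_simps)
  hence "(a\<^sup>2 - 1) * (b\<^sup>2 - 1) \<ge> (c + a*b)\<^sup>2" using pos by (simp add: mult_le_cancel_left_pos)
  hence "1 \<ge> a\<^sup>2 + b\<^sup>2 + c\<^sup>2 + 2*a*b*c" by (simp add: power2_eq_square algebra_simps)
  moreover have "c\<^sup>2 + 2*a*b*c \<ge> 0" using nn by simp
  ultimately show False using a1 b1 by linarith
qed

lemma trace_pos: fixes e f g :: real
  assumes "e*f + f*g + g*e > 0" "\<not> (e \<le> 0 \<and> f \<le> 0)" "\<not> (f \<le> 0 \<and> g \<le> 0)" "\<not> (g \<le> 0 \<and> e \<le> 0)"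
  shows "e + f + g > 0"
  by (smt (verit, best) assms(1,2,3,4) mult.commute ring_class.ring_distribs(1) zero_le_mult_iff)

lemma offd: fixes n La Lb Lc E sD :: real
  assumes "- n * Lc = 2 * La * Lb * E" "La > 0" "Lb > 0" "Lc > 0" "sD > 0"
  shows "- n / (2 * La * Lb * sD) = E / (Lc * sD)"
  using assms by (simp add: field_simps)

lemma diagd: fixes n La Lb Ea Eb sD :: real
  assumes "n = 2 * (Ea * Lb + Eb * La)" "La > 0" "Lb > 0" "sD > 0"
  shows "- n / (2 * La * Lb * sD) = - (Ea / (La * sD) + Eb / (Lb * sD))"
  using assms by (simp add: field_simps)

theorem lemma2p4:
  fixes I12 I23 I31 :: real and u :: "nat \<Rightarrow> real"
  assumes "I12 \<ge> 0" and "I23 \<ge> 0" and "I31 \<ge> 0"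
    and "u \<in> U_E I12 I23 I31"
  shows "let J = angle_jacobian I12 I23 I31 u; one = vec 3 (\<lambda>_. 1) in
           eigenvector J one 0 \<and>
           (\<exists>a b. a < 0 \<and> b < 0 \<and> char_poly J = [:0, 1:] * [:- a, 1:] * [:- b, 1:]) \<and>
           (\<forall>v \<in> carrier_vec 3. v \<bullet> (J *\<^sub>v v) \<le> 0) \<and>
           {v \<in> carrier_vec 3. J *\<^sub>v v = 0\<^sub>v 3} = {c \<cdot>\<^sub>v one | c. True}"
proof -
  define r where "r = (\<lambda>k. exp (u k))"
  define sD where "sD = sqrt (Dsym I12 I23 I31 r)"
  define w where "w = (\<lambda>k. Ef I12 I23 I31 r k / (Lf I12 I23 I31 r k * sD))"
  have rpos: "\<And>k. r k > 0" by (simp add: r_def)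
  have D0: "Dsym I12 I23 I31 r > 0" using Dsym_pos[OF assms] by (simp add: r_def)
  have sD0: "sD > 0" using D0 by (simp add: sD_def)
  have sD2: "sD^2 = Dsym I12 I23 I31 r" using D0 by (simp add: sD_def)
  have L0: "\<And>x. Lf I12 I23 I31 r x > 0" by (rule Lf_pos[OF assms(1-3) rpos])
  have AD: "\<And>i m. i < 3 \<Longrightarrow> deriv (\<lambda>t. tri_angle I12 I23 I31 (u(m:=t)) i) (u m) =
    - numf I12 I23 I31 r i m / (2 * Lf I12 I23 I31 r ((i+1) mod 3) * Lf I12 I23 I31 r ((i+2) mod 3) * sD)"
    using angle_deriv[OF assms] by (simp add: r_def sD_def)
  have md: "((0::nat)+1) mod 3 = 1" "((0::nat)+2) mod 3 = 2" "((1::nat)+1) mod 3 = 2" "((1::nat)+2) mod 3 = 0"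
     "((2::nat)+1) mod 3 = 0" "((2::nat)+2) mod 3 = 1" "(0::nat) < 3" "(1::nat) < 3" "(2::nat) < 3" by simp_all
  have entries: "deriv (\<lambda>t. tri_angle I12 I23 I31 (u(m:=t)) i) (u m) = Jm w $$ (i, m)" if im: "i < 3" "m < 3" for i m
  proof -
    consider "i = 0" "m = 0" | "i = 0" "m = 1" | "i = 0" "m = 2" | "i = 1" "m = 0" | "i = 1" "m = 1"
      | "i = 1" "m = 2" | "i = 2" "m = 0" | "i = 2" "m = 1" | "i = 2" "m = 2"
      using lt3x[OF im(1)] lt3x[OF im(2)] by blast
    thus ?thesis
    proof cases
      case 1
      have "deriv (\<lambda>t. tri_angle I12 I23 I31 (u(0:=t)) 0) (u 0) = - numf I12 I23 I31 r 0 0 / (2 * Lf I12 I23 I31 r 1 * Lf I12 I23 I31 r 2 * sD)"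
        using AD[of 0 0, OF md(7)] by (simp only: md)
      also have "\<dots> = - (w 1 + w 2)" unfolding w_def by (rule diagd[OF polys(7) L0 L0 sD0])
      also have "\<dots> = Jm w $$ (0, 0)" by (rule Jm_idx(1)[symmetric])
      finally show ?thesis using "1" by simp
    next
      case 2
      have "deriv (\<lambda>t. tri_angle I12 I23 I31 (u(1:=t)) 0) (u 1) = - numf I12 I23 I31 r 0 1 / (2 * Lf I12 I23 I31 r 1 * Lf I12 I23 I31 r 2 * sD)"
        using AD[of 0 1, OF md(7)] by (simp only: md)
      also have "\<dots> = w 2" unfolding w_def by (rule offd[OF polys(1) L0 L0 L0 sD0])
      also have "\<dots> = Jm w $$ (0, 1)" by (rule Jm_idx(2)[symmetric])
      finally show ?thesis using "2" by simp
    next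
      case 3
      have "deriv (\<lambda>t. tri_angle I12 I23 I31 (u(2:=t)) 0) (u 2) = - numf I12 I23 I31 r 0 2 / (2 * Lf I12 I23 I31 r 1 * Lf I12 I23 I31 r 2 * sD)"
        using AD[of 0 2, OF md(7)] by (simp only: md)
      also have "\<dots> = w 1" unfolding w_def by (rule offd[OF polys(2) L0 L0 L0 sD0])
      also have "\<dots> = Jm w $$ (0, 2)" by (rule Jm_idx(3)[symmetric])
      finally show ?thesis using "3" by simp
    next
      case 4
      have "deriv (\<lambda>t. tri_angle I12 I23 I31 (u(0:=t)) 1) (u 0) = - numf I12 I23 I31 r 1 0 / (2 * Lf I12 I23 I31 r 2 * Lf I12 I23 I31 r 0 * sD)"
        using AD[of 1 0, OF md(8)] by (simp only: md)
      also have "\<dots> = w 2" unfolding w_def by (rule offd[OF polys(3) L0 L0 L0 sD0])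
      also have "\<dots> = Jm w $$ (1, 0)" by (rule Jm_idx(4)[symmetric])
      finally show ?thesis using "4" by simp
    next
      case 5
      have "deriv (\<lambda>t. tri_angle I12 I23 I31 (u(1:=t)) 1) (u 1) = - numf I12 I23 I31 r 1 1 / (2 * Lf I12 I23 I31 r 2 * Lf I12 I23 I31 r 0 * sD)"
        using AD[of 1 1, OF md(8)] by (simp only: md)
      also have "\<dots> = - (w 2 + w 0)" unfolding w_def by (rule diagd[OF polys(8) L0 L0 sD0])
      also have "\<dots> = Jm w $$ (1, 1)" by (rule Jm_idx(5)[symmetric])
      finally show ?thesis using "5" by simp
    next
      case 6
      have "deriv (\<lambda>t. tri_angle I12 I23 I31 (u(2:=t)) 1) (u 2) = - numf I12 I23 I31 r 1 2 / (2 * Lf I12 I23 I31 r 2 * Lf I12 I23 I31 r 0 * sD)"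
        using AD[of 1 2, OF md(8)] by (simp only: md)
      also have "\<dots> = w 0" unfolding w_def by (rule offd[OF polys(4) L0 L0 L0 sD0])
      also have "\<dots> = Jm w $$ (1, 2)" by (rule Jm_idx(6)[symmetric])
      finally show ?thesis using "6" by simp
    next
      case 7
      have "deriv (\<lambda>t. tri_angle I12 I23 I31 (u(0:=t)) 2) (u 0) = - numf I12 I23 I31 r 2 0 / (2 * Lf I12 I23 I31 r 0 * Lf I12 I23 I31 r 1 * sD)"
        using AD[of 2 0, OF md(9)] by (simp only: md)
      also have "\<dots> = w 1" unfolding w_def by (rule offd[OF polys(5) L0 L0 L0 sD0])
      also have "\<dots> = Jm w $$ (2, 0)" by (rule Jm_idx(7)[symmetric])
      finally show ?thesis using "7" by simp
    next
      case 8
      have "deriv (\<lambda>t. tri_angle I12 I23 I31 (u(1:=t)) 2) (u 1) = - numf I12 I23 I31 r 2 1 / (2 * Lf I12 I23 I31 r 0 * Lf I12 I23 I31 r 1 * sD)"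
        using AD[of 2 1, OF md(9)] by (simp only: md)
      also have "\<dots> = w 0" unfolding w_def by (rule offd[OF polys(6) L0 L0 L0 sD0])
      also have "\<dots> = Jm w $$ (2, 1)" by (rule Jm_idx(8)[symmetric])
      finally show ?thesis using "8" by simp
    next
      case 9
      have "deriv (\<lambda>t. tri_angle I12 I23 I31 (u(2:=t)) 2) (u 2) = - numf I12 I23 I31 r 2 2 / (2 * Lf I12 I23 I31 r 0 * Lf I12 I23 I31 r 1 * sD)"
        using AD[of 2 2, OF md(9)] by (simp only: md)
      also have "\<dots> = - (w 0 + w 1)" unfolding w_def by (rule diagd[OF polys(9) L0 L0 sD0])
      also have "\<dots> = Jm w $$ (2, 2)" by (rule Jm_idx(9)[symmetric])
      finally show ?thesis using "9" by simp
    qed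
  qed
  have JJ: "angle_jacobian I12 I23 I31 u = Jm w"
  proof -
    have dimJ: "dim_row (Jm w) = 3" "dim_col (Jm w) = 3" by (simp_all add: Jm_def)
    show ?thesis by (rule eq_matI) (auto simp: angle_jacobian_def dimJ entries)
  qed
  have Hpos: "Hf I12 I23 I31 r > 0"
  proof -
    have h1: "0 \<le> (r 0)^2 * r 1 * (I31 + I23 * I12) + (r 0)^2 * r 2 * (I12 + I23 * I31)
      + (r 1)^2 * r 0 * (I23 + I31 * I12) + (r 1)^2 * r 2 * (I12 + I23 * I31)
      + (r 2)^2 * r 0 * (I23 + I31 * I12) + (r 2)^2 * r 1 * (I31 + I23 * I12)"
      using rpos[of 0] rpos[of 1] rpos[of 2] assms(1-3)
      by (intro add_nonneg_nonneg mult_nonneg_nonneg) auto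
    have "1 + I23 * I31 * I12 > 0" using assms(1-3) by (simp add: add_pos_nonneg)
    hence h2: "0 < 2 * r 0 * r 1 * r 2 * (1 + I23 * I31 * I12)"
      using rpos[of 0] rpos[of 1] rpos[of 2] by simp
    show ?thesis unfolding Hf_def using h1 h2 by linarith
  qed
  have sig: "w 0 * w 1 + w 1 * w 2 + w 2 * w 0 > 0"
  proof -
    have "w 0 * w 1 + w 1 * w 2 + w 2 * w 0 =
      (Ef I12 I23 I31 r 0 * Ef I12 I23 I31 r 1 * Lf I12 I23 I31 r 2 + Ef I12 I23 I31 r 1 * Ef I12 I23 I31 r 2 * Lf I12 I23 I31 r 0
       + Ef I12 I23 I31 r 2 * Ef I12 I23 I31 r 0 * Lf I12 I23 I31 r 1)
      / (Lf I12 I23 I31 r 0 * Lf I12 I23 I31 r 1 * Lf I12 I23 I31 r 2 * sD^2)"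
      unfolding w_def using L0[of 0] L0[of 1] L0[of 2] sD0 by (simp add: field_simps power2_eq_square)
    also have "\<dots> = r 0 * r 1 * r 2 * Dsym I12 I23 I31 r * Hf I12 I23 I31 r
      / (Lf I12 I23 I31 r 0 * Lf I12 I23 I31 r 1 * Lf I12 I23 I31 r 2 * Dsym I12 I23 I31 r)"
      by (simp only: sigma_poly sD2)
    also have "\<dots> > 0" using rpos[of 0] rpos[of 1] rpos[of 2] D0 Hpos L0[of 0] L0[of 1] L0[of 2]
      by (intro divide_pos_pos mult_pos_pos) auto
    finally show ?thesis .
  qed
  have wle: "Ef I12 I23 I31 r k \<le> 0" if "w k \<le> 0" for k
  proof -
    have "Lf I12 I23 I31 r k * sD > 0" using L0[of k] sD0 by simp
    thus ?thesis using that unfolding w_def by (simp add: divide_le_0_iff)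
  qed
  have cancel: "\<And>c g :: real. c > 0 \<Longrightarrow> c * g \<le> 0 \<Longrightarrow> g \<le> 0" by (simp add: mult_le_0_iff)
  have rr: "2 * r 1 * r 2 > 0" "2 * r 2 * r 0 > 0" "2 * r 0 * r 1 > 0"
    using rpos[of 0] rpos[of 1] rpos[of 2] by simp_all
  have G: "r 1 * r 2 * (1 - I23\<^sup>2) + r 1 * r 0 * (I31 + I12 * I23) + r 2 * r 0 * (I12 + I31 * I23) \<le> 0" if "w 0 \<le> 0"
    using wle[OF that] unfolding Ef_simps by (rule cancel[OF rr(1)])
  have G1: "r 2 * r 0 * (1 - I31\<^sup>2) + r 2 * r 1 * (I12 + I23 * I31) + r 0 * r 1 * (I23 + I12 * I31) \<le> 0" if "w 1 \<le> 0"
    using wle[OF that] unfolding Ef_simps by (rule cancel[OF rr(2)])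
  have G2: "r 0 * r 1 * (1 - I12\<^sup>2) + r 0 * r 2 * (I23 + I31 * I12) + r 1 * r 2 * (I31 + I23 * I12) \<le> 0" if "w 2 \<le> 0"
    using wle[OF that] unfolding Ef_simps by (rule cancel[OF rr(3)])
  have n01: "\<not> (w 0 \<le> 0 \<and> w 1 \<le> 0)"
    using two_neg[of "r 0" "r 1" "r 2" I23 I31 I12] rpos assms(1-3) G G1 by blast
  have n12: "\<not> (w 1 \<le> 0 \<and> w 2 \<le> 0)"
    using two_neg[of "r 1" "r 2" "r 0" I31 I12 I23] rpos assms(1-3) G1 G2 by blast
  have n20: "\<not> (w 2 \<le> 0 \<and> w 0 \<le> 0)"
    using two_neg[of "r 2" "r 0" "r 1" I12 I23 I31] rpos assms(1-3) G2 G by blast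
  have tr: "w 0 + w 1 + w 2 > 0" by (rule trace_pos[OF sig n01 n12 n20])
  show ?thesis
    unfolding Let_def JJ
    by (intro conjI Jm_eigen[OF sig tr] Jm_char[OF sig tr] Jm_nsd[OF sig tr] Jm_ker[OF sig tr])
qed


end
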